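(* Any algorithm that maintains a uniformly random sample of the active elements within a timestamp-based sliding window has memory usage $\Omega(\log n)$, where $n$ is the number of active elements: there exist streams for which, with positive probability, at some time the algorithm must store $\Omega(\log n)$ distinct elements.
   Context: A stream $p_0,p_1,\dots$ has non-decreasing timestamps $T(p_i)$ (several elements may share a timestamp); with fixed parameter $t_0$, element $p$ is active at time $t$ if $t-T(p)<t_0$, otherwise expired. The sample at each time must be uniform over the active elements at that time. *)

theory Defs
  imports "HOL-Probability.Probability"
begin

text \<open>A finite stream is a list of real timestamps ts (sorted = non-decreasing);
  element p_i is identified with its index i < length ts and has timestamp ts ! i.\<close>

definition arrived :: "real list \<Rightarrow> real \<Rightarrow> nat set" where
  "arrived ts t = {i. i < length ts \<and> ts ! i \<le> t}"

definition active :: "real \<Rightarrow> real list \<Rightarrow> real \<Rightarrow> nat set" where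
  "active t0 ts t = {i. i < length ts \<and> ts ! i \<le> t \<and> t - ts ! i < t0}"

text \<open>A randomized sliding-window sampling algorithm, with randomness drawn from the
  probability space M.  For a stream ts, a time t and random outcome w,
  Mem ts t w is the set of (indices of) distinct stream elements stored in memory
  at time t, and Smp ts t w is the sample reported at time t.
  Requirements: measurability; online (behaviour up to time t depends only on the
  elements that arrived by time t); only arrived elements can be stored; an element
  removed from memory cannot be recovered later; the sample is a stored element;
  the sample at every time is uniform over the active elements.\<close>
definition window_sampler ::
  "'w measure \<Rightarrow> real \<Rightarrow> (real list \<Rightarrow> real \<Rightarrow> 'w \<Rightarrow> nat set)
     \<Rightarrow> (real list \<Rightarrow> real \<Rightarrow> 'w \<Rightarrow> nat) \<Rightarrow> bool" where
  "window_sampler M t0 Mem Smp \<longleftrightarrow>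
     prob_space M \<and>
     (\<forall>ts t i. sorted ts \<longrightarrow>
        {w \<in> space M. i \<in> Mem ts t w} \<in> sets M \<and>
        {w \<in> space M. Smp ts t w = i} \<in> sets M) \<and>
     (\<forall>ts ts' t. sorted ts \<longrightarrow> sorted ts' \<longrightarrow>
        takeWhile (\<lambda>s. s \<le> t) ts = takeWhile (\<lambda>s. s \<le> t) ts' \<longrightarrow>
        Mem ts t = Mem ts' t \<and> Smp ts t = Smp ts' t) \<and>
     (\<forall>ts t. sorted ts \<longrightarrow> (\<forall>w\<in>space M. Mem ts t w \<subseteq> arrived ts t)) \<and>
     (\<forall>ts t t'. sorted ts \<longrightarrow> t \<le> t' \<longrightarrow>
        (\<forall>w\<in>space M. Mem ts t' w \<subseteq> Mem ts t w \<union> (arrived ts t' - arrived ts t))) \<and>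
     (\<forall>ts t. sorted ts \<longrightarrow> active t0 ts t \<noteq> {} \<longrightarrow>
        (\<forall>w\<in>space M. Smp ts t w \<in> Mem ts t w)) \<and>
     (\<forall>ts t. sorted ts \<longrightarrow> active t0 ts t \<noteq> {} \<longrightarrow>
        (\<forall>i\<in>active t0 ts t.
           measure M {w \<in> space M. Smp ts t w = i} = 1 / real (card (active t0 ts t))))"

end

theory Submission
  imports Defs "HOL-Analysis.Harmonic_Numbers"
begin

lemma harm_rev: "(\<Sum>k<n. 1 / real (n - k)) = (harm n :: real)"
proof -
  have "(\<Sum>k<n. 1 / real (n - k)) = (\<Sum>k<n. (\<lambda>j. inverse (real (Suc j))) (n - Suc k))"
    by (intro sum.cong) (auto simp: Suc_diff_Suc field_simps)
  also have "\<dots> = (\<Sum>j<n. inverse (real (Suc j)))"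
    by (rule sum.nat_diff_reindex)
  finally show ?thesis by (simp add: harm_altdef)
qed

lemma card_as_sum:
  fixes n :: nat
  assumes "A \<subseteq> {..<n}"
  shows "real (card A) = (\<Sum>i<n. if i \<in> A then 1 else 0)"
proof -
  have "(\<Sum>i<n. (if i \<in> A then 1 else 0::real)) = real (card ({..<n} \<inter> {x. x \<in> A}))"
  proof -
    have "(\<Sum>i<n. of_bool (i \<in> A)::real) = of_nat (card ({..<n} \<inter> {x. x \<in> A}))"
      by simp
    then show ?thesis by (simp add: of_bool_def)
  qed
  also have "{..<n} \<inter> {x. x \<in> A} = A" using assms by blast
  finally show ?thesis by simp
qed

lemma main:
  fixes M :: "'w measure"
  assumes t0: "t0 > 0" and ws: "window_sampler M t0 Mem Smp" and n: "n \<ge> 1"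
  shows "\<exists>ts t. sorted ts \<and> card (active t0 ts t) = n \<and>
     measure M {w \<in> space M. real (card (Mem ts t w)) \<ge> 1 * ln (real n)} > 0"
proof -
  define d where "d = t0 / real n"
  have d: "d > 0" using t0 n by (simp add: d_def)
  have t0d: "t0 = real n * d" using n by (simp add: d_def)
  define ts where "ts = map (\<lambda>i. real i * d) [0..<n]"
  define tk where "tk = (\<lambda>k::nat. (real n - 1 + real k) * d)"
  have len: "length ts = n" by (simp add: ts_def)
  have nth: "i < n \<Longrightarrow> ts ! i = real i * d" for i by (simp add: ts_def)
  have sorted: "sorted ts"
    unfolding sorted_iff_nth_mono len
    using d by (auto simp: nth intro!: mult_right_mono)
  have le: "ts ! i \<le> tk k" if "i < n" for i k
    using that d n by (auto simp: nth tk_def intro!: mult_right_mono)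
  have act: "active t0 ts (tk k) = {k..<n}" if "k < n" for k
  proof -
    have "tk k - ts ! i < t0 \<longleftrightarrow> k \<le> i" if "i < n" for i
    proof -
      have "tk k - ts ! i = (real n - 1 + real k - real i) * d"
        using that by (simp add: nth tk_def algebra_simps)
      then have "tk k - ts ! i < t0 \<longleftrightarrow> real n - 1 + real k - real i < real n"
        using d t0d by simp
      also have "\<dots> \<longleftrightarrow> k \<le> i" by linarith
      finally show ?thesis .
    qed
    then show ?thesis unfolding active_def len using le by auto
  qed
  have arr: "arrived ts (tk k) = {..<n}" for k
    unfolding arrived_def len using le by auto
  have t_eq: "tk 0 = real (n - 1) * d" using n by (simp add: tk_def of_nat_diff)
  note Wd = ws[unfolded window_sampler_def]
  have P: "prob_space M" by (rule conjunct1[OF Wd])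
  note W_meas = conjunct1[OF conjunct2[OF Wd], rule_format, OF sorted]
  note W_arr = conjunct1[OF conjunct2[OF conjunct2[OF conjunct2[OF Wd]]], rule_format, OF sorted]
  note W_mono = conjunct1[OF conjunct2[OF conjunct2[OF conjunct2[OF conjunct2[OF Wd]]]], rule_format, OF sorted]
  note W_in = conjunct1[OF conjunct2[OF conjunct2[OF conjunct2[OF conjunct2[OF conjunct2[OF Wd]]]]], rule_format, OF sorted]
  note W_unif = conjunct2[OF conjunct2[OF conjunct2[OF conjunct2[OF conjunct2[OF conjunct2[OF Wd]]]]], rule_format, OF sorted]
  interpret prob_space M by (rule P)
  define t where "t = tk 0"
  have memsub: "Mem ts (tk k) w \<subseteq> Mem ts t w" if "w \<in> space M" for k w
  proof -
    have "t \<le> tk k" using d by (simp add: t_def tk_def)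
    then have "Mem ts (tk k) w \<subseteq> Mem ts t w \<union> (arrived ts (tk k) - arrived ts t)"
      using W_mono that by blast
    then show ?thesis unfolding t_def arr by simp
  qed
  have memn: "Mem ts t w \<subseteq> {..<n}" if "w \<in> space M" for w
  proof -
    have "Mem ts t w \<subseteq> arrived ts t" using W_arr that by blast
    then show ?thesis using arr[of 0] by (simp add: t_def)
  qed
  have smpin: "Smp ts (tk k) w \<in> Mem ts (tk k) w" if "w \<in> space M" "k < n" for k w
  proof -
    have ne: "active t0 ts (tk k) \<noteq> {}" using act[of k] that by auto
    show ?thesis using W_in[OF ne] that(1) by blast
  qed
  define A where "A = (\<lambda>k. {w \<in> space M. Smp ts (tk k) w = k})"
  have Ameas: "A k \<in> sets M" for k
    using W_meas unfolding A_def by blast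
  have Aprob: "measure M (A k) = 1 / real (n - k)" if "k < n" for k
  proof -
    have "k \<in> active t0 ts (tk k)" using act[OF that] that by simp
    then have "measure M (A k) = 1 / real (card (active t0 ts (tk k)))"
      using W_unif[of "tk k" k] by (auto simp: A_def)
    then show ?thesis using act[OF that] by simp
  qed
  define B where "B = (\<lambda>i. {w \<in> space M. i \<in> Mem ts t w})"
  have Bmeas: "B i \<in> sets M" for i
    using W_meas unfolding B_def by blast
  define F where "F = (\<lambda>w. \<Sum>i<n. indicator (B i) w :: real)"
  have F_eq: "F w = real (card (Mem ts t w))" if "w \<in> space M" for w
    using card_as_sum[OF memn[OF that]] memn[OF that] that by (simp add: F_def B_def indicator_def Int_absorb1)
  have Fmeas: "F \<in> borel_measurable M" unfolding F_def using Bmeas by measurable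
  define X where "X = (\<lambda>w. \<Sum>k<n. indicator (A k) w :: real)"
  have XF: "X w \<le> F w" if "w \<in> space M" for w
  proof -
    have "X w = real (card {k \<in> {..<n}. w \<in> A k})"
    proof -
      have e: "{..<n} \<inter> {k. w \<in> A k} = {k \<in> {..<n}. w \<in> A k}" by auto
      show ?thesis by (simp add: X_def indicator_def sum.If_cases e)
    qed
    also have "\<dots> \<le> real (card (Mem ts t w))"
    proof -
      have "{k \<in> {..<n}. w \<in> A k} \<subseteq> Mem ts t w"
      proof
        fix k assume "k \<in> {k \<in> {..<n}. w \<in> A k}"
        then have k: "k < n" "Smp ts (tk k) w = k" by (auto simp: A_def)
        show "k \<in> Mem ts t w" using smpin[OF that k(1)] memsub[OF that, of k] k(2) by auto
      qed
      moreover have "finite (Mem ts t w)" using memn[OF that] finite_subset by blast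
      ultimately show ?thesis by (simp add: card_mono)
    qed
    finally show ?thesis using F_eq[OF that] by simp
  qed
  have Iind: "integrable M (indicator (A k) :: 'w \<Rightarrow> real)" for k
    using Ameas[of k] by (intro integrable_real_indicator) (auto simp: emeasure_eq_measure)
  have Xint: "integrable M X" unfolding X_def
    by (rule Bochner_Integration.integrable_sum) (rule Iind)
  have intX: "integral\<^sup>L M X = harm n"
  proof -
    have "integral\<^sup>L M X = (\<Sum>k<n. integral\<^sup>L M (indicator (A k) :: 'w \<Rightarrow> real))"
      unfolding X_def by (rule Bochner_Integration.integral_sum) (rule Iind)
    also have "\<dots> = (\<Sum>k<n. measure M (A k))"
    proof (rule sum.cong)
      fix k show "integral\<^sup>L M (indicator (A k) :: 'w \<Rightarrow> real) = measure M (A k)"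
        using sets.sets_into_space[OF Ameas[of k]] by (simp add: Int_absorb2)
    qed simp
    also have "\<dots> = (\<Sum>k<n. 1 / real (n - k))" using Aprob by simp
    finally show ?thesis using harm_rev by simp
  qed
  define S where "S = {w \<in> space M. real (card (Mem ts t w)) \<ge> 1 * ln (real n)}"
  have S_eq: "S = {w \<in> space M. F w \<ge> ln (real n)}" using F_eq by (auto simp: S_def)
  have Smeas: "S \<in> sets M" unfolding S_eq using Fmeas by measurable
  have "measure M S > 0"
  proof (rule ccontr)
    assume "\<not> measure M S > 0"
    then have "measure M S = 0" using measure_nonneg[of M S] by linarith
    then have "S \<in> null_sets M" using Smeas by (simp add: emeasure_eq_measure null_sets_def)
    then have "AE w in M. w \<notin> S" by (rule AE_not_in)
    then have "AE w in M. X w \<le> ln (real n)"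
    proof (rule AE_mp[OF _ AE_I2])
      fix w assume "w \<in> space M"
      then show "w \<notin> S \<longrightarrow> X w \<le> ln (real n)"
        using XF[of w] F_eq[of w] by (auto simp: S_def)
    qed
    then have "integral\<^sup>L M X \<le> integral\<^sup>L M (\<lambda>_. ln (real n))"
      using Xint by (intro integral_mono_AE) auto
    also have "\<dots> = ln (real n)" by (simp add: prob_space)
    finally have "harm n \<le> ln (real n)" using intX by simp
    moreover have "ln (real n + 1) \<le> harm n" by (rule ln_le_harm)
    moreover have "ln (real n) < ln (real n + 1)" using n by simp
    ultimately show False by simp
  qed
  moreover have "card (active t0 ts t) = n" unfolding t_def using act[of 0] n by simp
  ultimately show ?thesis using sorted unfolding S_def by blast
qed

theorem lemma4p7:
  "\<exists>c>0. \<exists>N::nat. \<forall>(t0::real) (M::'w measure) Mem Smp.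
     t0 > 0 \<longrightarrow> window_sampler M t0 Mem Smp \<longrightarrow>
     (\<forall>n\<ge>N. \<exists>ts t. sorted ts \<and> card (active t0 ts t) = n \<and>
        measure M {w \<in> space M. real (card (Mem ts t w)) \<ge> c * ln (real n)} > 0)"
proof (intro exI[of _ "1::real"] conjI exI[of _ "1::nat"] allI impI)
  fix t0 :: real and M :: "'w measure" and Mem Smp and n :: nat
  assume "t0 > 0" "window_sampler M t0 Mem Smp" "n \<ge> 1"
  from main[OF this] show "\<exists>ts t. sorted ts \<and> card (active t0 ts t) = n \<and>
        measure M {w \<in> space M. real (card (Mem ts t w)) \<ge> 1 * ln (real n)} > 0" .
qed simp

end
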